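(* The function $g(z)=\sum_{n=0}^\infty\frac{z^n}{(2n+1)!}$ is holomorphic on $\mathbb C$, and $g'(z)\ne0$ for all $z$ in the open disc $B_{\pi^2}(0)=\{|z|<\pi^2\}$. Moreover, the restriction of $g$ to the circle $\partial B_{\pi^2}(0)$ is a homeomorphism onto its image, and this image (a Jordan curve) surrounds the disc $B_1(1)=\{|w-1|<1\}$, i.e. $B_1(1)$ is contained in the bounded component of the complement of $g(\partial B_{\pi^2}(0))$.
   Context: For real $r>-\pi^2$ this $g$ coincides with $\sinh(\sqrt r)/\sqrt r$ (with value $1$ at $r=0$, and $\sin(\sqrt{-r})/\sqrt{-r}$ for $r<0$). *)

theory Defs
  imports "HOL-Complex_Analysis.Complex_Analysis"
begin

definition g_fun :: "complex \<Rightarrow> complex" where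
  "g_fun z = (\<Sum>n. z ^ n / of_nat (fact (2 * n + 1)))"

end

theory Submission
  imports Defs
begin


definition cf :: "nat \<Rightarrow> complex" where "cf n = inverse (of_nat (fact (2*n+1)))"

lemma g_fun_eq: "g_fun z = (\<Sum>n. cf n * z^n)"
  unfolding g_fun_def cf_def by (simp add: divide_inverse mult.commute)

lemma summable_cf: "summable (\<lambda>n. cf n * y^n)"
proof (rule summable_comparison_test[OF _ summable_exp[of "norm y"]])
  show "\<exists>N. \<forall>n\<ge>N. norm (cf n * y ^ n) \<le> inverse (fact n) * norm y ^ n"
  proof (intro exI allI impI)
    fix n :: nat
    have f: "(fact n :: real) \<le> fact (2*n+1)" by (rule fact_mono) simp
    have "norm (cf n * y ^ n) = inverse (fact (2*n+1)) * norm y ^ n"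
      unfolding cf_def norm_mult norm_power norm_inverse norm_of_nat
      by (simp only: of_nat_fact)
    also have "\<dots> \<le> inverse (fact n) * norm y ^ n"
      by (intro mult_right_mono le_imp_inverse_le f) auto
    finally show "norm (cf n * y ^ n) \<le> inverse (fact n) * norm y ^ n" .
  qed
qed

definition D :: "complex \<Rightarrow> complex" where "D z = (\<Sum>n. diffs cf n * z^n)"

lemma g_deriv: "(g_fun has_field_derivative D z) (at z)"
  unfolding D_def g_fun_eq[abs_def]
  by (rule termdiffs_strong_converges_everywhere) (rule summable_cf)

lemma g_holo: "g_fun holomorphic_on UNIV"
  using g_deriv holomorphic_on_def field_differentiable_def
  by (metis field_differentiable_at_within)

lemma deriv_g: "deriv g_fun z = D z"
  by (rule DERIV_imp_deriv[OF g_deriv])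

lemma summable_D: "summable (\<lambda>n. diffs cf n * z^n)"
  by (rule termdiff_converges_all) (use summable_cf in auto)

lemma diffs_cf: "diffs cf n = of_real (real (Suc n) / fact (2*n+3))"
proof -
  have e: "2 * Suc n + 1 = 2*n+3" by simp
  show ?thesis unfolding diffs_def cf_def e
    by (simp add: divide_inverse of_nat_fact del: fact_Suc)
qed



lemma geom_tail:
  fixes a :: "nat \<Rightarrow> real"
  assumes a0: "\<And>n. 0 \<le> a n" and aq: "\<And>n. a (Suc n) \<le> q * a n" and q: "0 \<le> q" "q < 1"
  shows "summable a \<and> suminf a \<le> a 0 / (1 - q)"
proof -
  have b: "a n \<le> a 0 * q^n" for n
  proof (induction n)
    case 0 then show ?case by simp
  next
    case (Suc n)
    have "a (Suc n) \<le> q * a n" by (rule aq)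
    also have "\<dots> \<le> q * (a 0 * q^n)" using Suc q by (intro mult_left_mono) auto
    finally show ?case by (simp add: algebra_simps)
  qed
  have sg: "summable (\<lambda>n. a 0 * q^n)" using q by (intro summable_mult summable_geometric) auto
  have sa: "summable a"
    by (rule summable_comparison_test[OF _ sg]) (use a0 b in auto)
  have "suminf a \<le> (\<Sum>n. a 0 * q^n)" by (rule suminf_le[OF b sa sg])
  also have "\<dots> = a 0 / (1 - q)" using q by (simp add: suminf_mult suminf_geometric divide_simps)
  finally show ?thesis using sa by simp
qed

lemma r_bounds: "(986/100) \<le> pi^2" "pi^2 \<le> ((987/100)::real)"
proof -
  have "3.141592653588 \<le> pi" "pi \<le> 3.1415926535899" using pi_approx by auto
  then have "(3.141592653588::real)^2 \<le> pi^2" by (intro power_mono) auto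
  moreover have "pi^2 \<le> (3.1415926535899::real)^2" using pi_approx by (intro power_mono) auto
  ultimately show "(986/100) \<le> pi^2" "pi^2 \<le> ((987/100)::real)" by (simp_all add: power2_eq_square)
qed

lemma poly2:
  fixes r x :: real
  assumes "(986/100) \<le> r" "r \<le> (987/100)" "-r \<le> x" "x \<le> r"
  shows "1/6 + x/60 + (2*x^2 - r^2)/1680 + (4*x^3 - 3*r^2*x)/90720 \<ge> (45/1000)"
proof -
  define s where "s = x + r"
  have s0: "0 \<le> s" "s \<le> 2*r" using assms by (auto simp: s_def)
  define K where "K = (15120 - 1512*r + 54*r^2 - r^3)/90720"
  define A where "A = (1512 - 216*r + 9*r^2)/90720"
  define B where "B = (108 - 12*r)/90720"
  have eq: "1/6 + x/60 + (2*x^2 - r^2)/1680 + (4*x^3 - 3*r^2*x)/90720 = K + s*(A + B* s) + s^3/22680"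
    unfolding K_def A_def B_def s_def by (simp add: field_simps power2_eq_square power3_eq_cube)
  have B0: "B \<le> 0" using assms by (simp add: B_def)
  have "A + B* s \<ge> A + B*(2*r)" using B0 s0 by (simp add: mult_left_mono_neg)
  moreover have "A + B*(2*r) = (1512 - 15*r^2)/90720" by (simp add: A_def B_def field_simps power2_eq_square)
  moreover have "r^2 \<le> (987/100)^2" using assms by (intro power_mono) auto
  moreover have "((987/100)::real)^2 = (974169/10000)" by (simp add: power2_eq_square)
  ultimately have "r^2 \<le> 974169/10000" "A + B* s \<ge> (1512 - 15*r^2)/90720" by simp_all
  moreover have "(1512 - 15*r^2)/90720 \<ge> 0" using \<open>r^2 \<le> 974169/10000\<close> by simp
  ultimately have AB: "A + B* s \<ge> 0" by linarith
  have "r^2 \<ge> (986/100)^2" using assms by (intro power_mono) auto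
  then have r2: "r^2 \<ge> 972196/10000" by (simp add: power2_eq_square)
  have "r^3 \<le> (987/100)^3" using assms by (intro power_mono) auto
  then have r3: "r^3 \<le> 961504803/1000000" by (simp add: power3_eq_cube)
  have "15120 - 1512*r + 54*r^2 - r^3 \<ge> 4100" using assms r2 r3 by linarith
  then have "K \<ge> (45/1000)" unfolding K_def by simp
  moreover have "s*(A+B* s) \<ge> 0" using AB s0 by simp
  moreover have "s^3/22680 \<ge> 0" using s0 by simp
  ultimately show ?thesis unfolding eq by linarith
qed

lemma poly3:
  fixes r s :: real
  assumes "(986/100) \<le> r" "r \<le> (987/100)" "0 \<le> s" "s \<le> 2*r"
  shows "1/120 + 2*(s - 2*r)/5040 + (2 * s - 3*r)^2/362880 \<ge> (28/10000)"
proof -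
  have "1/120 + 2*(s - 2*r)/5040 + (2 * s - 3*r)^2/362880 =
        (1/120 - 4*r/5040 + 9*r^2/362880) + s*(2/5040 - 12*r/362880 + 4* s/362880)"
    by (simp add: field_simps power2_eq_square)
  moreover have "s*(2/5040 - 12*r/362880 + 4* s/362880) \<ge> 0" using assms by simp
  moreover have "r^2 \<ge> (986/100)^2" using assms by (intro power_mono) auto
  moreover have "((986/100)::real)^2 = (972196/10000)" by (simp add: power2_eq_square)
  ultimately show ?thesis using assms by linarith
qed



lemma fact_numerals: "(fact 3::real) = 6" "(fact 5::real) = 120" "(fact 7::real) = 5040"
  "(fact 9::real) = 362880" "(fact 11::real) = 39916800"
  by (simp_all add: fact_numeral)

lemma Re_pow23: "Re (z^2) = Re z^2 - Im z^2" "Re (z^3) = Re z^3 - 3 * Re z * Im z^2"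
  by (simp_all add: power2_eq_square power3_eq_cube algebra_simps)

lemma fact_plus2: "(fact (Suc (Suc m)) :: real) = (real m + 2) * (real m + 1) * fact m"
  by (simp add: algebra_simps)

definition dr :: "nat \<Rightarrow> real" where "dr n = real (Suc n) / fact (2*n+3)"

lemma Re_D_sums: "(\<lambda>n. dr n * Re (z^n)) sums Re (D z)"
proof -
  have "(\<lambda>n. Re (diffs cf n * z^n)) sums Re (D z)"
    unfolding D_def by (rule sums_Re[OF summable_sums[OF summable_D]])
  moreover have "Re (diffs cf n * z^n) = dr n * Re (z^n)" for n
  proof -
    have d: "diffs cf n = of_real (dr n)" by (simp only: diffs_cf dr_def)
    show ?thesis unfolding d by simp
  qed
  ultimately show ?thesis by simp
qed

lemma tail_D:
  fixes r :: real
  assumes r: "0 \<le> r" "r \<le> 10"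
  defines "a \<equiv> \<lambda>n. dr (n+4) * r^(n+4)"
  shows "summable a \<and> suminf a \<le> a 0 / (1 - 1/10)"
proof (rule geom_tail)
  show "0 \<le> a n" for n using r by (simp add: a_def dr_def)
  show "a (Suc n) \<le> 1/10 * a n" for n
  proof -
    define F :: real where "F = fact (2*n+11)"
    have F0: "F > 0" by (simp add: F_def)
    have e: "2 * (Suc n + 4) + 3 = Suc (Suc (2*n+11))" by simp
    have fe: "fact (2 * (Suc n + 4) + 3) = (real (2*n+11) + 2) * (real (2*n+11) + 1) * F"
      unfolding e fact_plus2 F_def ..
    have pe: "r^(Suc n + 4) = r * r^(n+4)" by (simp only: add_Suc power_Suc)
    have e2: "2 * (n + 4) + 3 = 2*n+11" by simp
    have key: "10 * (real n + 6) * r \<le> (real n + 5) * ((2*real n+13) * (2*real n+12))"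
    proof -
      have "(10 * (real n + 6)) * r \<le> (10 * (real n + 6)) * 10" using r by (intro mult_left_mono) auto
      also have "\<dots> \<le> 2 * (real n + 6) * ((real n + 5) * (2 * real n + 13))"
        by (simp add: algebra_simps)
      also have "\<dots> = (real n + 5) * ((2*real n+13) * (2*real n+12))" by (simp add: algebra_simps)
      finally show ?thesis .
    qed
    have "a (Suc n) = r^(n+4) * ((real n + 6) * r / ((2*real n+13) * (2*real n+12) * F))"
      unfolding a_def dr_def fe pe by (simp add: field_simps)
    also have "\<dots> \<le> r^(n+4) * ((real n + 5) / (10 * F))"
    proof (rule mult_left_mono)
      show "(real n + 6) * r / ((2*real n+13) * (2*real n+12) * F) \<le> (real n + 5) / (10 * F)"
        using F0 key by (simp add: divide_simps) (simp add: algebra_simps)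
    qed (use r in simp)
    also have "\<dots> = 1/10 * a n" unfolding a_def dr_def e2 F_def by (simp add: field_simps)
    finally show ?thesis .
  qed
qed simp_all



lemma circle_xy: assumes "cmod z = r" shows "Im z ^ 2 = r^2 - Re z^2" "-r \<le> Re z" "Re z \<le> r"
proof -
  have "cmod z ^ 2 = Re z ^ 2 + Im z ^ 2" by (rule cmod_power2)
  then show "Im z ^ 2 = r^2 - Re z^2" using assms by simp
  show "-r \<le> Re z" "Re z \<le> r" using abs_Re_le_cmod[of z] assms by auto
qed

lemma ReD_circle:
  assumes z: "cmod z = pi^2"
  shows "Re (D z) \<ge> 1/25"
proof -
  define r where "r = pi^2"
  have rb: "986/100 \<le> r" "r \<le> 987/100" using r_bounds by (auto simp: r_def)
  have zr: "cmod z = r" using z by (simp add: r_def)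
  define x where "x = Re z"
  note xy = circle_xy[OF zr, folded x_def]
  define t where "t n = dr n * Re (z^n)" for n
  have ts: "t sums Re (D z)" unfolding t_def by (rule Re_D_sums)
  then have st: "summable t" by (rule sums_summable)
  have split: "Re (D z) = (\<Sum>n. t (n+4)) + (\<Sum>i<4. t i)"
    using suminf_split_initial_segment[OF st, of 4] sums_unique[OF ts] by simp
  have first: "(\<Sum>i<4. t i) = 1/6 + x/60 + (2*x^2 - r^2)/1680 + (4*x^3 - 3*r^2*x)/90720"
  proof -
    have "(\<Sum>i<4. t i) = t 0 + t 1 + t 2 + t 3" by (simp add: eval_nat_numeral)
    also have "\<dots> = 1/6 + x/60 + (2*x^2 - r^2)/1680 + (4*x^3 - 3*r^2*x)/90720"
    proof -
      have d: "dr 0 = 1/6" "dr 1 = 2/120" "dr 2 = 3/5040" "dr 3 = 4/362880"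
        by (simp_all add: dr_def fact_numerals)
      have e0: "t 0 = 1/6" unfolding t_def d by simp
      have e1: "t 1 = x/60" unfolding t_def d by (simp add: x_def)
      have e2: "t 2 = (2*x^2 - r^2)/1680" unfolding t_def d Re_pow23 x_def[symmetric] xy(1)
        by (simp add: field_simps)
      have e3: "t 3 = (4*x^3 - 3*r^2*x)/90720"
      proof -
        have "t 3 = 4/362880 * (x^3 - 3 * x * (r^2 - x^2))"
          unfolding t_def d Re_pow23 x_def[symmetric] xy(1) by simp
        also have "\<dots> = (4*x^3 - 3*r^2*x)/90720" by (simp add: field_simps power2_eq_square power3_eq_cube)
        finally show ?thesis .
      qed
      show ?thesis unfolding e0 e1 e2 e3 by (rule refl)
    qed
    finally show ?thesis .
  qed
  have p: "(\<Sum>i<4. t i) \<ge> 45/1000" unfolding first by (rule poly2[OF rb xy(2,3)])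
  define a where "a = (\<lambda>n. dr (n+4) * r^(n+4))"
  have ta: "summable a \<and> suminf a \<le> a 0 / (1 - 1/10)" unfolding a_def
    by (rule tail_D) (use rb in auto)
  have "r^4 \<le> (987/100)^4" using rb by (intro power_mono) auto
  then have r4: "r^4 \<le> 9491" by (simp add: power_numeral_even)
  have d4: "dr 4 = 5/39916800" by (simp add: dr_def fact_numerals)
  have a0: "a 0 = 5 * r^4 / 39916800" by (simp add: a_def d4)
  have sa: "suminf a \<le> 1/500" using ta r4 unfolding a0 by simp
  have le: "- a n \<le> t (n+4)" for n
  proof -
    have "\<bar>Re (z^(n+4))\<bar> \<le> r^(n+4)" using abs_Re_le_cmod[of "z^(n+4)"] zr by (simp add: norm_power)
    moreover have "dr (n+4) \<ge> 0" by (simp add: dr_def)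
    ultimately have "\<bar>t (n+4)\<bar> \<le> a n" unfolding t_def a_def abs_mult
      by (simp add: mult_left_mono)
    then show ?thesis by simp
  qed
  have "(\<Sum>n. - a n) \<le> (\<Sum>n. t (n+4))"
    by (rule suminf_le[OF le]) (use ta summable_minus st summable_ignore_initial_segment in auto)
  then have "(\<Sum>n. t (n+4)) \<ge> - suminf a" using ta by (simp add: suminf_minus)
  then show ?thesis using split p sa by linarith
qed



lemma D_eq: "D = deriv g_fun" by (rule ext) (simp add: deriv_g)

lemma D_holo: "D holomorphic_on UNIV"
  unfolding D_eq by (rule holomorphic_deriv[OF g_holo open_UNIV])

lemma ReD_disc:
  assumes "cmod z \<le> pi^2"
  shows "Re (D z) \<ge> 1/25"
proof -
  have pi0: "pi^2 > 0" by simp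
  have "Re ((\<lambda>z. - D z) z) \<le> - (1/25)"
  proof (rule maximum_real_frontier[where f = "\<lambda>z. - D z" and S = "cball 0 (pi^2)" and B = "- (1/25)"])
    show "(\<lambda>z. - D z) holomorphic_on interior (cball 0 (pi^2))"
      by (rule holomorphic_on_subset[OF holomorphic_on_minus[OF D_holo]]) auto
    show "continuous_on (closure (cball 0 (pi^2))) (\<lambda>z. - D z)"
      by (intro continuous_intros holomorphic_on_imp_continuous_on holomorphic_on_subset[OF D_holo]) auto
    show "bounded (cball (0::complex) (pi^2))" by simp
    show "Re (- D w) \<le> - (1/25)" if "w \<in> frontier (cball 0 (pi^2))" for w
      using that ReD_circle[of w] pi0 by (simp add: frontier_cball)
    show "z \<in> cball 0 (pi^2)" using assms by simp
  qed
  then show ?thesis by simp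
qed

lemma g_inj: "inj_on g_fun (cball 0 (pi^2))"
proof (rule inj_onI, rule ccontr)
  fix z1 z2 assume z1: "z1 \<in> cball 0 (pi^2)" and z2: "z2 \<in> cball 0 (pi^2)"
    and eq: "g_fun z1 = g_fun z2" and ne: "z1 \<noteq> z2"
  define d where "d = z1 - z2"
  have d0: "d \<noteq> 0" using ne by (simp add: d_def)
  define F where "F w = cnj d * g_fun (z2 + w * d)" for w
  define F' where "F' w = cnj d * (D (z2 + w * d) * d)" for w
  have dF: "(F has_field_derivative F' w) (at w)" for w
  proof -
    have "((\<lambda>w. z2 + w * d) has_field_derivative d) (at w)"
      by (auto intro!: derivative_eq_intros)
    from DERIV_chain[OF g_deriv this] have "((\<lambda>w. g_fun (z2 + w * d)) has_field_derivative D (z2 + w * d) * d) (at w)"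
      by (simp add: o_def)
    then show ?thesis unfolding F_def F'_def by (rule DERIV_cmult)
  qed
  define phi where "phi t = Re (F (of_real t))" for t
  have dphi: "DERIV phi t :> Re (F' (of_real t))" for t
    unfolding phi_def by (rule has_field_derivative_Re[OF has_vector_derivative_real_field[OF dF]])
  obtain xi where xi: "0 < xi" "xi < 1" "phi 1 - phi 0 = (1 - 0) * Re (F' (of_real xi))"
    using MVT2[of 0 1 phi "\<lambda>t. Re (F' (of_real t))"] dphi by auto
  have "phi 1 = phi 0" unfolding phi_def F_def using eq by (simp add: d_def)
  moreover have "Re (F' (of_real xi)) > 0"
  proof -
    have p: "z2 + of_real xi * d \<in> cball 0 (pi^2)"
    proof -
      have "z2 + of_real xi * d = (1 - xi) *\<^sub>R z2 + xi *\<^sub>R z1"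
        by (simp add: d_def scaleR_conv_of_real algebra_simps)
      moreover have "(1 - xi) *\<^sub>R z2 + xi *\<^sub>R z1 \<in> cball 0 (pi^2)"
        by (rule convexD[OF convex_cball z2 z1]) (use xi in auto)
      ultimately show ?thesis by simp
    qed
    have "Re (D (z2 + of_real xi * d)) \<ge> 1/25" using ReD_disc p by simp
    moreover have "F' (of_real xi) = of_real ((cmod d)^2) * D (z2 + of_real xi * d)"
    proof -
      have cd: "cnj d * d = of_real ((cmod d)^2)" using complex_mult_cnj[of d] by (simp only: mult.commute cmod_power2)
      have "F' (of_real xi) = (cnj d * d) * D (z2 + of_real xi * d)" unfolding F'_def by (simp only: mult_ac)
      then show ?thesis unfolding cd .
    qed
    moreover have "(cmod d)^2 > 0" using d0 by simp
    ultimately show ?thesis by simp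
  qed
  ultimately show False using xi by simp
qed



definition H :: "complex \<Rightarrow> complex" where "H z = (\<Sum>n. cf (Suc n) * z^n)"

lemma summable_H: "summable (\<lambda>n. cf (Suc n) * y^n)"
proof (rule summable_comparison_test[OF _ summable_exp[of "norm y"]])
  show "\<exists>N. \<forall>n\<ge>N. norm (cf (Suc n) * y ^ n) \<le> inverse (fact n) * norm y ^ n"
  proof (intro exI allI impI)
    fix n :: nat
    have f: "(fact n :: real) \<le> fact (2*Suc n+1)" by (rule fact_mono) simp
    have "norm (cf (Suc n) * y ^ n) = inverse (fact (2*Suc n+1)) * norm y ^ n"
      unfolding cf_def norm_mult norm_power norm_inverse norm_of_nat
      by (simp only: of_nat_fact)
    also have "\<dots> \<le> inverse (fact n) * norm y ^ n"
      by (intro mult_right_mono le_imp_inverse_le f) auto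
    finally show "norm (cf (Suc n) * y ^ n) \<le> inverse (fact n) * norm y ^ n" .
  qed
qed

lemma g_H: "g_fun z = 1 + z * H z"
proof -
  have s: "summable (\<lambda>n. cf n * z^n)" by (rule summable_cf)
  have "(\<Sum>n. cf (Suc n) * z^(Suc n)) = g_fun z - cf 0 * z^0"
    unfolding g_fun_eq by (rule suminf_split_head[OF s])
  moreover have "(\<Sum>n. cf (Suc n) * z^(Suc n)) = z * H z"
    unfolding H_def by (subst suminf_mult[OF summable_H, symmetric]) (simp add: mult_ac)
  moreover have "cf 0 = 1" by (simp add: cf_def)
  ultimately have "g_fun z - 1 = z * H z" by simp
  then show ?thesis by (metis diff_add_cancel add.commute)
qed

lemma g_minus_r: "g_fun (- of_real (pi^2)) = 0"
proof -
  have "(\<lambda>n. sin_coeff n * pi^n) sums 0" using sin_converges[of pi] by simp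
  moreover have "sin_coeff n * pi^n = 0" if "n \<notin> range (\<lambda>n. 2*n+1)" for n
  proof -
    have "even n"
    proof (rule ccontr)
      assume "odd n"
      then obtain k where "n = 2*k+1" by (rule oddE)
      then show False using that by auto
    qed
    then show ?thesis by (simp add: sin_coeff_def)
  qed
  ultimately have "(\<lambda>n. sin_coeff (2*n+1) * pi^(2*n+1)) sums 0"
    using sums_mono_reindex[where g = "\<lambda>n. 2*n+1" and f = "\<lambda>n. sin_coeff n * pi^n"]
    by (auto simp: strict_mono_def)
  moreover have "sin_coeff (2*n+1) * pi^(2*n+1) = pi * ((- (pi^2))^n / fact (2*n+1))" for n
  proof -
    have mp: "(- (pi^2))^n = (-1)^n * (pi^2)^n" by (rule power_minus)
    have sc: "sin_coeff (2*n+1) = (-1)^n / fact (2*n+1)" by (simp add: sin_coeff_def)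
    have pp: "pi^(2*n+1) = pi * (pi^2)^n" by (simp add: power_mult)
    show ?thesis unfolding mp sc pp by simp
  qed
  ultimately have "(\<lambda>n. pi * ((- (pi^2))^n / fact (2*n+1))) sums 0" by simp
  then have "(\<lambda>n. (- (pi^2))^n / fact (2*n+1)) sums (0 / pi)" by (rule sums_mult_D) simp
  then have "(\<lambda>n. of_real ((- (pi^2))^n / fact (2*n+1)) :: complex) sums 0"
    using sums_of_real[of "\<lambda>n. (- (pi^2))^n / fact (2*n+1)" 0, where 'a=complex] by simp
  moreover have "(of_real ((- (pi^2))^n / fact (2*n+1)) :: complex) = (- of_real (pi^2))^n / of_nat (fact (2*n+1))" for n
    by (simp add: of_real_power algebra_simps)
  ultimately have "(\<lambda>n. (- of_real (pi^2))^n / of_nat (fact (2*n+1)) :: complex) sums 0" by simp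
  then show ?thesis unfolding g_fun_def by (rule sums_unique[symmetric])
qed

lemma H_minus_r: "H (- of_real (pi^2)) = of_real (1 / pi^2)"
proof -
  have "0 = 1 + (- of_real (pi^2)) * H (- of_real (pi^2))" using g_H g_minus_r by metis
  then have "of_real (pi^2) * H (- of_real (pi^2)) = 1" by (simp add: algebra_simps)
  then show ?thesis by (simp add: field_simps)
qed

lemma unit_bound:
  fixes u :: complex
  assumes "cmod u = 1"
  shows "1 - Re (u^n) \<le> (real n)^2 * (1 - Re u)"
proof -
  have sq: "cmod (1 - v)^2 = 2 - 2 * Re v" if "cmod v = 1" for v :: complex
  proof -
    have "cmod v ^2 = Re v^2 + Im v^2" by (rule cmod_power2)
    moreover have "cmod (1 - v)^2 = (1 - Re v)^2 + Im v^2" by (simp add: cmod_power2)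
    ultimately show ?thesis using that by (simp add: power2_eq_square algebra_simps)
  qed
  have "cmod (1^n - u^n) \<le> real n * cmod (1 - u)" by (rule norm_power_diff) (use assms in auto)
  then have "cmod (1 - u^n)^2 \<le> (real n * cmod (1 - u))^2" by (intro power_mono) auto
  moreover have "cmod (u^n) = 1" using assms by (simp add: norm_power)
  ultimately have "2 - 2 * Re (u^n) \<le> (real n)^2 * (2 - 2 * Re u)"
    using sq[of "u^n"] sq[of u] assms by (simp add: power_mult_distrib)
  then show ?thesis by (simp add: algebra_simps)
qed

lemma even_bound:
  assumes z: "cmod z = r" and r: "r > 0" and n: "even n" "n \<ge> 1"
  shows "r^n - Re (z^n) \<le> (real n)^2 * r^(n-1) * (Re z + r)"
proof -
  define u where "u = - z / of_real r"
  have "cmod u = 1" using z r by (simp add: u_def norm_divide)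
  from unit_bound[OF this, of n]
  have b: "1 - Re (u^n) \<le> (real n)^2 * (1 - Re u)" .
  have "u^n = z^n / of_real (r^n)" using n by (simp add: u_def power_divide of_real_power)
  then have un: "Re (u^n) = Re (z^n) / r^n" by simp
  have u1: "Re u = - Re z / r" by (simp add: u_def)
  have rn: "r^n = r * r^(n-1)" using n by (cases n) auto
  have "r^n - Re (z^n) = r^n * (1 - Re (u^n))" using r by (simp add: un field_simps)
  also have "\<dots> \<le> r^n * ((real n)^2 * (1 - Re u))" using b r by (intro mult_left_mono) auto
  also have "\<dots> = (real n)^2 * r^(n-1) * (Re z + r)" using r unfolding u1 rn by (simp add: field_simps)
  finally show ?thesis .
qed



definition hr :: "nat \<Rightarrow> real" where "hr n = 1 / fact (2*n+3)"

lemma cf_Suc: "cf (Suc n) = of_real (hr n)"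
proof -
  have e: "2 * Suc n + 1 = 2*n+3" by simp
  show ?thesis unfolding cf_def hr_def e
    by (simp add: divide_inverse of_nat_fact del: fact_Suc)
qed

lemma tail_H:
  fixes r :: real
  assumes r: "0 \<le> r" "r \<le> 10"
  defines "a \<equiv> \<lambda>n. (real (n+4))^2 * r^(n+3) * hr (n+4)"
  shows "summable a \<and> suminf a \<le> a 0 / (1 - 1/5)"
proof (rule geom_tail)
  show "0 \<le> a n" for n using r by (simp add: a_def hr_def)
  show "a (Suc n) \<le> 1/5 * a n" for n
  proof -
    define F :: real where "F = fact (2*n+11)"
    have F0: "F > 0" by (simp add: F_def)
    have e: "2 * (Suc n + 4) + 3 = Suc (Suc (2*n+11))" by simp
    have fe: "fact (2 * (Suc n + 4) + 3) = (real (2*n+11) + 2) * (real (2*n+11) + 1) * F"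
      unfolding e fact_plus2 F_def ..
    have pe: "r^(Suc n + 3) = r * r^(n+3)" by (simp only: add_Suc power_Suc)
    have e2: "2 * (n + 4) + 3 = 2*n+11" by simp
    have key: "5 * (real n + 5)^2 * r \<le> (real n + 4)^2 * ((2*real n+13) * (2*real n+12))"
    proof -
      have q: "(real n + 5)^2 \<le> 2 * (real n + 4)^2"
      proof -
        have "2*(real n + 4)^2 - (real n + 5)^2 = (real n)^2 + 6 * real n + 7"
          by (simp add: algebra_simps power2_eq_square)
        moreover have "0 \<le> (real n)^2 + 6 * real n + 7" by simp
        ultimately show ?thesis by linarith
      qed
      have "5 * (real n + 5)^2 * r \<le> 5 * (real n + 5)^2 * 10" using r by (intro mult_left_mono) auto
      also have "\<dots> \<le> 5 * (2 * (real n + 4)^2) * 10" using q by simp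
      also have "\<dots> = (real n + 4)^2 * 100" by simp
      also have "\<dots> \<le> (real n + 4)^2 * ((2*real n+13) * (2*real n+12))"
      proof (rule mult_left_mono)
        have "(13::real) * 12 \<le> (2*real n+13) * (2*real n+12)" by (intro mult_mono) auto
        then show "100 \<le> (2*real n+13) * (2*real n+12)" by simp
      qed simp
      finally show ?thesis .
    qed
    have "a (Suc n) = r^(n+3) * ((real n + 5)^2 * r / ((2*real n+13) * (2*real n+12) * F))"
      unfolding a_def hr_def fe pe by (simp add: field_simps)
    also have "\<dots> \<le> r^(n+3) * ((real n + 4)^2 / (5 * F))"
    proof (rule mult_left_mono)
      show "(real n + 5)^2 * r / ((2*real n+13) * (2*real n+12) * F) \<le> (real n + 4)^2 / (5 * F)"
        using F0 key by (simp add: divide_simps)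
    qed (use r in simp)
    also have "\<dots> = 1/5 * a n" unfolding a_def hr_def e2 F_def by (simp add: field_simps)
    finally show ?thesis .
  qed
qed simp_all



lemma g_circle_far:
  assumes z: "cmod z = pi^2"
  shows "cmod (g_fun z - 1) \<ge> 1"
proof -
  define r where "r = pi^2"
  have rb: "986/100 \<le> r" "r \<le> 987/100" using r_bounds by (auto simp: r_def)
  have r0: "r > 0" using rb by simp
  have zr: "cmod z = r" using z by (simp add: r_def)
  define x where "x = Re z"
  note xy = circle_xy[OF zr, folded x_def]
  define s where "s = x + r"
  have s0: "0 \<le> s" "s \<le> 2*r" using xy by (auto simp: s_def)
  define w :: complex where "w = - of_real r"
  have Hw: "H w = of_real (1/r)" unfolding w_def r_def by (rule H_minus_r)
  define u where "u n = hr n * (Re (z^n) - (-r)^n)" for n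
  have us: "u sums Re (H z - H w)"
  proof -
    have "(\<lambda>n. cf (Suc n) * z^n - cf (Suc n) * w^n) sums (H z - H w)"
      unfolding H_def by (intro sums_diff summable_sums summable_H)
    note sR = sums_Re[OF this]
    have "(\<lambda>n. Re (cf (Suc n) * z^n - cf (Suc n) * w^n)) = u"
    proof (rule ext)
      fix n
      have "w^n = of_real ((-r)^n)" by (simp add: w_def of_real_power)
      then show "Re (cf (Suc n) * z^n - cf (Suc n) * w^n) = u n"
        unfolding u_def cf_Suc by (simp add: algebra_simps)
    qed
    then show ?thesis using sR by simp
  qed
  have ReHw: "Re (H z - H w) = Re (H z) - 1/r" using Hw by simp
  have su: "summable u" using us by (rule sums_summable)
  have split: "Re (H z - H w) = (\<Sum>n. u (n+4)) + (\<Sum>i<4. u i)"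
    using suminf_split_initial_segment[OF su, of 4] sums_unique[OF us] by simp
  have first: "(\<Sum>i<4. u i) = s * (1/120 + 2*(s - 2*r)/5040 + (2 * s - 3*r)^2/362880)"
  proof -
    have "(\<Sum>i<4. u i) = u 0 + u 1 + u 2 + u 3" by (simp add: eval_nat_numeral)
    also have "\<dots> = s * (1/120 + 2*(s - 2*r)/5040 + (2 * s - 3*r)^2/362880)"
    proof -
      have d: "hr 0 = 1/6" "hr 1 = 1/120" "hr 2 = 1/5040" "hr 3 = 1/362880"
        by (simp_all add: hr_def fact_numerals)
      have xs: "x = s - r" by (simp add: s_def)
      have e0: "u 0 = 0" unfolding u_def by simp
      have e1: "u 1 = s/120" unfolding u_def d by (simp add: x_def[symmetric] s_def)
      have e2: "u 2 = s * (2 * (s - 2*r)) / 5040" 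
      proof -
        have "u 2 = (2*x^2 - r^2 - r^2)/5040" unfolding u_def d Re_pow23 x_def[symmetric] xy(1)
          by (simp add: power2_eq_square)
        also have "\<dots> = s * (2 * (s - 2*r)) / 5040" unfolding xs by (simp add: algebra_simps power2_eq_square)
        finally show ?thesis .
      qed
      have e3: "u 3 = s*(2 * s-3*r)^2 / 362880"
      proof -
        have "u 3 = (x^3 - 3 * x * (r^2 - x^2) + r^3)/362880"
          unfolding u_def d Re_pow23 x_def[symmetric] xy(1) by simp
        also have "\<dots> = (4*x^3 - 3*r^2*x + r^3)/362880" by (simp add: algebra_simps power2_eq_square power3_eq_cube)
        also have "\<dots> = s*(2 * s-3*r)^2 / 362880" unfolding xs by (simp add: algebra_simps power2_eq_square power3_eq_cube)
        finally show ?thesis .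
      qed
      show ?thesis unfolding e0 e1 e2 e3 by (simp add: field_simps)
    qed
    finally show ?thesis .
  qed
  have p: "(\<Sum>i<4. u i) \<ge> s * (28/10000)"
    unfolding first by (rule mult_left_mono[OF poly3[OF rb s0] s0(1)])
  define a where "a = (\<lambda>n. (real (n+4))^2 * r^(n+3) * hr (n+4))"
  have ta: "summable a \<and> suminf a \<le> a 0 / (1 - 1/5)" unfolding a_def
    by (rule tail_H) (use rb in auto)
  have "r^3 \<le> (987/100)^3" using rb by (intro power_mono) auto
  then have r3: "r^3 \<le> 962" by (simp add: power3_eq_cube)
  have d4: "hr 4 = 1/39916800" by (simp add: hr_def fact_numerals)
  have a0: "a 0 = 16 * r^3 / 39916800" by (simp add: a_def d4)
  have sa: "suminf a \<le> 5/10000" using ta r3 unfolding a0 by simp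
  have le: "- (s * a n) \<le> u (n+4)" for n
  proof (cases "even (n+4)")
    case True
    have "r^(n+4) - Re (z^(n+4)) \<le> (real (n+4))^2 * r^(n+4-1) * (Re z + r)"
      by (rule even_bound[OF zr r0 True]) simp
    moreover have "n + 4 - 1 = n + 3" by simp
    ultimately have "r^(n+4) - Re (z^(n+4)) \<le> (real (n+4))^2 * r^(n+3) * s"
      unfolding s_def x_def by (simp add: add.commute)
    then have "Re (z^(n+4)) - r^(n+4) \<ge> - ((real (n+4))^2 * r^(n+3) * s)"
      by linarith
    moreover have "(-r)^(n+4) = r^(n+4)" using True by simp
    moreover have "hr (n+4) \<ge> 0" by (simp add: hr_def)
    ultimately have "hr (n+4) * (Re (z^(n+4)) - (-r)^(n+4)) \<ge> hr (n+4) * (- ((real (n+4))^2 * r^(n+3) * s))"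
      by (intro mult_left_mono) auto
    then show ?thesis unfolding u_def a_def by (simp add: algebra_simps)
  next
    case False
    have "\<bar>Re (z^(n+4))\<bar> \<le> r^(n+4)" using abs_Re_le_cmod[of "z^(n+4)"] zr by (simp add: norm_power)
    moreover have "(-r)^(n+4) = -(r^(n+4))" using False by simp
    ultimately have "Re (z^(n+4)) - (-r)^(n+4) \<ge> 0" by linarith
    then have "u (n+4) \<ge> 0" unfolding u_def by (simp add: hr_def)
    moreover have "s * a n \<ge> 0" using s0 r0 by (simp add: a_def hr_def)
    ultimately show ?thesis by linarith
  qed
  have "(\<Sum>n. - (s * a n)) \<le> (\<Sum>n. u (n+4))"
    by (rule suminf_le[OF le]) (use ta summable_minus summable_mult su summable_ignore_initial_segment in auto)
  moreover have "(\<Sum>n. - (s * a n)) = - (s * suminf a)" using ta by (simp add: suminf_minus suminf_mult)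
  moreover have "s * suminf a \<le> s * (5/10000)" using sa s0 by (intro mult_left_mono) auto
  ultimately have "Re (H z - H w) \<ge> 0" using split p s0 by linarith
  then have ReH: "Re (H z) \<ge> 1/r" using ReHw by simp
  have "cmod (g_fun z - 1) = r * cmod (H z)" by (simp add: g_H norm_mult zr)
  also have "\<dots> \<ge> r * (1/r)"
    using ReH complex_Re_le_cmod[of "H z"] r0 by (intro mult_left_mono) auto
  finally show ?thesis using r0 by simp
qed



lemma g0: "g_fun 0 = 1" using g_H[of 0] by simp

theorem lemma3p4:
  shows "g_fun holomorphic_on UNIV
    \<and> (\<forall>z. cmod z < pi\<^sup>2 \<longrightarrow> deriv g_fun z \<noteq> 0)
    \<and> (\<exists>h. homeomorphism (sphere 0 (pi\<^sup>2)) (g_fun ` sphere 0 (pi\<^sup>2)) g_fun h)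
    \<and> (\<exists>C \<in> components (- (g_fun ` sphere 0 (pi\<^sup>2))). bounded C \<and> ball 1 1 \<subseteq> C)"
proof (intro conjI)
  show "g_fun holomorphic_on UNIV" by (rule g_holo)
  show "\<forall>z. cmod z < pi\<^sup>2 \<longrightarrow> deriv g_fun z \<noteq> 0"
  proof (intro allI impI)
    fix z :: complex assume "cmod z < pi^2"
    then have "Re (D z) \<ge> 1/25" by (intro ReD_disc) simp
    then show "deriv g_fun z \<noteq> 0" by (auto simp: deriv_g)
  qed
  have contg: "continuous_on S g_fun" for S
    by (rule holomorphic_on_imp_continuous_on[OF holomorphic_on_subset[OF g_holo]]) simp
  show "\<exists>h. homeomorphism (sphere 0 (pi\<^sup>2)) (g_fun ` sphere 0 (pi\<^sup>2)) g_fun h"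
    by (rule homeomorphism_compact[OF compact_sphere contg refl inj_on_subset[OF g_inj]]) auto
  define r where "r = pi^2"
  have r0: "r > 0" by (simp add: r_def)
  define \<Gamma> where "\<Gamma> = g_fun ` sphere 0 r"
  have far: "w \<notin> \<Gamma>" if "dist 1 w < 1" for w
  proof
    assume "w \<in> \<Gamma>"
    then obtain z where "cmod z = r" "w = g_fun z" by (auto simp: \<Gamma>_def)
    then have "cmod (w - 1) \<ge> 1" using g_circle_far[of z] by (simp add: r_def)
    then show False using that by (simp add: dist_norm norm_minus_commute)
  qed
  have one: "1 \<in> - \<Gamma>" using far[of 1] by simp
  define C where "C = connected_component_set (- \<Gamma>) 1"
  have Ccomp: "C \<in> components (- \<Gamma>)" unfolding C_def by (rule componentsI[OF one])
  have ball: "ball 1 1 \<subseteq> C" unfolding C_def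
    by (rule connected_component_maximal) (use far in auto)
  define U where "U = g_fun ` ball 0 r"
  define V where "V = - (g_fun ` cball 0 r)"
  have oU: "open U" unfolding U_def
  proof (rule open_mapping_thm[OF g_holo open_UNIV connected_UNIV open_ball subset_UNIV])
    show "\<not> g_fun constant_on UNIV"
    proof
      assume "g_fun constant_on UNIV"
      then have "g_fun 0 = g_fun (- of_real (pi^2))" unfolding constant_on_def by auto
      then show False using g0 g_minus_r by simp
    qed
  qed
  have cK: "compact (g_fun ` cball 0 r)" by (rule compact_continuous_image[OF contg compact_cball])
  have oV: "open V" unfolding V_def using cK by (simp add: compact_imp_closed open_Compl)
  have cC: "connected C" unfolding C_def by (rule connected_connected_component)
  have sub: "C \<subseteq> U \<union> V"
  proof
    fix x assume xC: "x \<in> C"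
    then have "x \<notin> \<Gamma>" unfolding C_def using connected_component_subset by blast
    then show "x \<in> U \<union> V"
      unfolding U_def V_def \<Gamma>_def by (force simp: less_le)
  qed
  have dis: "U \<inter> V \<inter> C = {}" unfolding U_def V_def by auto
  have "1 \<in> U" unfolding U_def using g0 r0 by (metis centre_in_ball image_eqI)
  moreover have "1 \<in> C" unfolding C_def using one by simp
  ultimately have "V \<inter> C = {}" using connectedD[OF cC oU oV dis sub] by blast
  then have "C \<subseteq> U" using sub by blast
  also have "U \<subseteq> g_fun ` cball 0 r" unfolding U_def by auto
  finally have "bounded C" using cK bounded_subset compact_imp_bounded by blast
  then show "\<exists>C \<in> components (- (g_fun ` sphere 0 (pi\<^sup>2))). bounded C \<and> ball 1 1 \<subseteq> C"
    using Ccomp ball unfolding \<Gamma>_def r_def by blast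
qed

end
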